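(* Let $(S,* )$ be a finite indecomposable cycle set of size $n$, with class $d$ and permutation group $\mathcal G$. Then $n$ divides $|\mathcal G|$. In particular, every prime divisor of $n$ is a prime divisor of $|\mathcal G|$ and of $d$, and if $d$ is a power of a prime $p$ then $n$ is also a power of $p$.
   Context: A cycle set is a set $S$ with a binary operation $*$ such that each $t\mapsto s*t$ is bijective and $(s*t)*(s*u)=(t*s)*(t*u)$ for all $s,t,u$. Write $S=\{s_1,\dots,s_n\}$, let $\psi(s)\in\mathfrak S_n$ satisfy $s_i*s_j=s_{\psi(s_i)(j)}$, and $\mathcal G=\langle\psi(s_1),\dots,\psi(s_n)\rangle\le\mathfrak S_n$, acting on $S$ via $\sigma(s_j)=s_{\sigma(j)}$. $S$ is decomposable if there is a partition $S=X\sqcup Y$ with $X,Y$ nonempty and $\psi(s)(X)\subseteq X$, $\psi(s)(Y)\subseteq Y$ for all $s\in S$; otherwise it is indecomposable. With $T(s)=s*s$ and $\psi_k(s)=\psi(T^{k-1}(s))\circ\cdots\circ\psi(s)$, the class $d$ is the least integer $d\ge1$ with $\psi_d(s)=\mathrm{id}$ for all $s$. *)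

theory Defs
  imports "HOL-Algebra.Generated_Groups" "HOL-Algebra.Bij" "HOL-Computational_Algebra.Primes"
begin

definition cycle_set :: "'a set \<Rightarrow> ('a \<Rightarrow> 'a \<Rightarrow> 'a) \<Rightarrow> bool" where
  "cycle_set S op \<longleftrightarrow>
     (\<forall>s\<in>S. bij_betw (op s) S S) \<and>
     (\<forall>s\<in>S. \<forall>t\<in>S. \<forall>u\<in>S. op (op s t) (op s u) = op (op t s) (op t u))"

definition cs_psi :: "'a set \<Rightarrow> ('a \<Rightarrow> 'a \<Rightarrow> 'a) \<Rightarrow> 'a \<Rightarrow> ('a \<Rightarrow> 'a)" where
  "cs_psi S op s = (\<lambda>t\<in>S. op s t)"

definition cs_group :: "'a set \<Rightarrow> ('a \<Rightarrow> 'a \<Rightarrow> 'a) \<Rightarrow> ('a \<Rightarrow> 'a) set" where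
  "cs_group S op = generate (BijGroup S) (cs_psi S op ` S)"

definition decomposable :: "'a set \<Rightarrow> ('a \<Rightarrow> 'a \<Rightarrow> 'a) \<Rightarrow> bool" where
  "decomposable S op \<longleftrightarrow>
     (\<exists>X Y. X \<noteq> {} \<and> Y \<noteq> {} \<and> X \<union> Y = S \<and> X \<inter> Y = {} \<and>
        (\<forall>s\<in>S. cs_psi S op s ` X \<subseteq> X \<and> cs_psi S op s ` Y \<subseteq> Y))"

definition indecomposable :: "'a set \<Rightarrow> ('a \<Rightarrow> 'a \<Rightarrow> 'a) \<Rightarrow> bool" where
  "indecomposable S op \<longleftrightarrow> \<not> decomposable S op"

definition cs_T :: "('a \<Rightarrow> 'a \<Rightarrow> 'a) \<Rightarrow> 'a \<Rightarrow> 'a" where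
  "cs_T op s = op s s"

primrec cs_psik :: "('a \<Rightarrow> 'a \<Rightarrow> 'a) \<Rightarrow> nat \<Rightarrow> 'a \<Rightarrow> 'a \<Rightarrow> 'a" where
  "cs_psik op 0 s t = t"
| "cs_psik op (Suc k) s t = op ((cs_T op ^^ k) s) (cs_psik op k s t)"

definition is_class :: "'a set \<Rightarrow> ('a \<Rightarrow> 'a \<Rightarrow> 'a) \<Rightarrow> nat \<Rightarrow> bool" where
  "is_class S op d \<longleftrightarrow>
     d \<ge> 1 \<and> (\<forall>s\<in>S. \<forall>t\<in>S. cs_psik op d s t = t) \<and>
     (\<forall>d'. 1 \<le> d' \<and> d' < d \<longrightarrow> \<not> (\<forall>s\<in>S. \<forall>t\<in>S. cs_psik op d' s t = t))"

end

theory Submission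
  imports Defs "HOL-Algebra.Group_Action" "HOL-Library.Multiset"
begin

locale cs_ctx =
  fixes S :: "'a set" and op :: "'a \<Rightarrow> 'a \<Rightarrow> 'a"
  assumes cyc: "cycle_set S op" and fin: "finite S"
begin

interpretation B: group "BijGroup S" by (rule group_BijGroup)

abbreviation "BG \<equiv> BijGroup S"

lemma carrier_BG: "carrier BG = Bij S" by (simp add: BijGroup_def)

lemma mult_eval: "f \<in> Bij S \<Longrightarrow> g \<in> Bij S \<Longrightarrow> x \<in> S \<Longrightarrow> (f \<otimes>\<^bsub>BG\<^esub> g) x = f (g x)"
  by (simp add: BijGroup_def compose_def)

lemma one_eval: "x \<in> S \<Longrightarrow> \<one>\<^bsub>BG\<^esub> x = x"
  by (simp add: BijGroup_def)

lemma inv_in: "f \<in> Bij S \<Longrightarrow> x \<in> S \<Longrightarrow> (inv\<^bsub>BG\<^esub> f) x \<in> S"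
  by (simp add: inv_BijGroup Bij_inv_into_mem)

lemma inv_eval1: "f \<in> Bij S \<Longrightarrow> x \<in> S \<Longrightarrow> f ((inv\<^bsub>BG\<^esub> f) x) = x"
  by (simp add: inv_BijGroup Bij_def bij_betw_inv_into_right Bij_inv_into_mem)
  (meson bij_betw_inv_into_right)

lemma inv_eval2: "f \<in> Bij S \<Longrightarrow> x \<in> S \<Longrightarrow> (inv\<^bsub>BG\<^esub> f) (f x) = x"
  by (auto simp add: inv_BijGroup Bij_def bij_betw_inv_into_left bij_betw_apply)

lemma Bij_eqI: "f \<in> Bij S \<Longrightarrow> g \<in> Bij S \<Longrightarrow> (\<And>x. x \<in> S \<Longrightarrow> f x = g x) \<Longrightarrow> f = g"
  by (meson Bij_imp_extensional extensionalityI)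

lemma Bij_mem: "f \<in> Bij S \<Longrightarrow> x \<in> S \<Longrightarrow> f x \<in> S"
  using Bij_imp_funcset by blast

definition psi where "psi s = cs_psi S op s"
definition mu where "mu s = inv\<^bsub>BG\<^esub> (psi s)"

lemma psi_Bij: "s \<in> S \<Longrightarrow> psi s \<in> Bij S"
  using cyc by (auto simp: psi_def cs_psi_def cycle_set_def Bij_def bij_betw_def inj_on_def)

lemma psi_eval: "x \<in> S \<Longrightarrow> psi s x = op s x"
  by (simp add: psi_def cs_psi_def)

lemma op_mem: "s \<in> S \<Longrightarrow> t \<in> S \<Longrightarrow> op s t \<in> S"
  using cyc by (auto simp: cycle_set_def bij_betw_def)

lemma mu_Bij: "s \<in> S \<Longrightarrow> mu s \<in> Bij S"
  using psi_Bij B.inv_closed by (simp add: mu_def carrier_BG)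

lemma psi_comm: "x \<in> S \<Longrightarrow> y \<in> S \<Longrightarrow>
   psi (op x y) \<otimes>\<^bsub>BG\<^esub> psi x = psi (op y x) \<otimes>\<^bsub>BG\<^esub> psi y"
proof -
  assume x: "x \<in> S" and y: "y \<in> S"
  have ci: "\<forall>s\<in>S. \<forall>t\<in>S. \<forall>u\<in>S. op (op s t) (op s u) = op (op t s) (op t u)"
    using cyc by (simp add: cycle_set_def)
  show ?thesis
  proof (rule Bij_eqI)
    show "psi (op x y) \<otimes>\<^bsub>BG\<^esub> psi x \<in> Bij S"
      using B.m_closed psi_Bij x y op_mem by (simp add: carrier_BG)
    show "psi (op y x) \<otimes>\<^bsub>BG\<^esub> psi y \<in> Bij S"
      using B.m_closed psi_Bij x y op_mem by (simp add: carrier_BG)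
    fix z assume z: "z \<in> S"
    show "(psi (op x y) \<otimes>\<^bsub>BG\<^esub> psi x) z = (psi (op y x) \<otimes>\<^bsub>BG\<^esub> psi y) z"
      using ci x y z by (simp add: mult_eval psi_Bij op_mem psi_eval)
  qed
qed

lemma mu_comm: "x \<in> S \<Longrightarrow> y \<in> S \<Longrightarrow>
   mu x \<otimes>\<^bsub>BG\<^esub> mu (op x y) = mu y \<otimes>\<^bsub>BG\<^esub> mu (op y x)"
proof -
  assume x: "x \<in> S" and y: "y \<in> S"
  have c: "psi x \<in> carrier BG" "psi y \<in> carrier BG" "psi (op x y) \<in> carrier BG" "psi (op y x) \<in> carrier BG"
    using psi_Bij x y op_mem carrier_BG by auto
  have "mu x \<otimes>\<^bsub>BG\<^esub> mu (op x y) = inv\<^bsub>BG\<^esub> (psi (op x y) \<otimes>\<^bsub>BG\<^esub> psi x)"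
    unfolding mu_def using B.inv_mult_group[OF c(3) c(1)] by simp
  also have "\<dots> = inv\<^bsub>BG\<^esub> (psi (op y x) \<otimes>\<^bsub>BG\<^esub> psi y)" using psi_comm[OF x y] by simp
  also have "\<dots> = mu y \<otimes>\<^bsub>BG\<^esub> mu (op y x)"
    unfolding mu_def using B.inv_mult_group[OF c(4) c(2)] by simp
  finally show ?thesis .
qed

definition step where
  "step t \<sigma> = (if \<sigma> \<in> Bij S \<and> t \<in> S then \<sigma> \<otimes>\<^bsub>BG\<^esub> mu ((inv\<^bsub>BG\<^esub> \<sigma>) t) else \<sigma>)"

lemma inv_Bij: "f \<in> Bij S \<Longrightarrow> inv\<^bsub>BG\<^esub> f \<in> Bij S"
  using B.inv_closed carrier_BG by auto

lemma mult_Bij: "f \<in> Bij S \<Longrightarrow> g \<in> Bij S \<Longrightarrow> f \<otimes>\<^bsub>BG\<^esub> g \<in> Bij S"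
  using B.m_closed carrier_BG by auto

lemma step_Bij: "\<sigma> \<in> Bij S \<Longrightarrow> step t \<sigma> \<in> Bij S"
  unfolding step_def using mult_Bij mu_Bij inv_in by auto

lemma step_eq: "\<sigma> \<in> Bij S \<Longrightarrow> t \<in> S \<Longrightarrow> step t \<sigma> = \<sigma> \<otimes>\<^bsub>BG\<^esub> mu ((inv\<^bsub>BG\<^esub> \<sigma>) t)"
  unfolding step_def by simp

lemma inv_step_eval: "\<sigma> \<in> Bij S \<Longrightarrow> x \<in> S \<Longrightarrow> u \<in> S \<Longrightarrow>
   (inv\<^bsub>BG\<^esub> (\<sigma> \<otimes>\<^bsub>BG\<^esub> mu x)) u = op x ((inv\<^bsub>BG\<^esub> \<sigma>) u)"
proof -
  assume s: "\<sigma> \<in> Bij S" and x: "x \<in> S" and u: "u \<in> S"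
  have "inv\<^bsub>BG\<^esub> (\<sigma> \<otimes>\<^bsub>BG\<^esub> mu x) = inv\<^bsub>BG\<^esub> (mu x) \<otimes>\<^bsub>BG\<^esub> inv\<^bsub>BG\<^esub> \<sigma>"
    using B.inv_mult_group s mu_Bij[OF x] carrier_BG by auto
  also have "inv\<^bsub>BG\<^esub> (mu x) = psi x" unfolding mu_def
    using B.inv_inv psi_Bij[OF x] carrier_BG by auto
  finally show ?thesis
    using mult_eval[OF psi_Bij[OF x] inv_Bij[OF s] u] psi_eval inv_in[OF s u] by simp
qed

lemma step_comm: "step u (step t \<sigma>) = step t (step u \<sigma>)"
proof (cases "\<sigma> \<in> Bij S \<and> t \<in> S \<and> u \<in> S")
  case False
  show ?thesis
  proof (cases "\<sigma> \<in> Bij S")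
    case s: True
    then have "t \<notin> S \<or> u \<notin> S" using False by blast
    then show ?thesis
    proof
      assume t: "t \<notin> S"
      have "\<And>\<tau>. step t \<tau> = \<tau>" using t unfolding step_def by simp
      then show ?thesis by simp
    next
      assume u: "u \<notin> S"
      have "\<And>\<tau>. step u \<tau> = \<tau>" using u unfolding step_def by simp
      then show ?thesis by simp
    qed
  next
    case ns: False
    have "step t \<sigma> = \<sigma>" "step u \<sigma> = \<sigma>" using ns unfolding step_def by simp_all
    then show ?thesis by simp
  qed
next
  case True
  then have s: "\<sigma> \<in> Bij S" and t: "t \<in> S" and u: "u \<in> S" by auto
  define x where "x = (inv\<^bsub>BG\<^esub> \<sigma>) t"
  define y where "y = (inv\<^bsub>BG\<^esub> \<sigma>) u"
  have x: "x \<in> S" and y: "y \<in> S" using s t u inv_in x_def y_def by auto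
  have sx: "step t \<sigma> = \<sigma> \<otimes>\<^bsub>BG\<^esub> mu x" using step_eq[OF s t] x_def by simp
  have sy: "step u \<sigma> = \<sigma> \<otimes>\<^bsub>BG\<^esub> mu y" using step_eq[OF s u] y_def by simp
  have bx: "\<sigma> \<otimes>\<^bsub>BG\<^esub> mu x \<in> Bij S" using mult_Bij s mu_Bij x by auto
  have by': "\<sigma> \<otimes>\<^bsub>BG\<^esub> mu y \<in> Bij S" using mult_Bij s mu_Bij y by auto
  have "step u (step t \<sigma>) = \<sigma> \<otimes>\<^bsub>BG\<^esub> mu x \<otimes>\<^bsub>BG\<^esub> mu (op x y)"
    unfolding sx step_eq[OF bx u] inv_step_eval[OF s x u] y_def by simp
  also have "\<dots> = \<sigma> \<otimes>\<^bsub>BG\<^esub> (mu x \<otimes>\<^bsub>BG\<^esub> mu (op x y))"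
    using B.m_assoc s mu_Bij x y op_mem carrier_BG by auto
  also have "\<dots> = \<sigma> \<otimes>\<^bsub>BG\<^esub> (mu y \<otimes>\<^bsub>BG\<^esub> mu (op y x))"
    using mu_comm[OF x y] by simp
  also have "\<dots> = \<sigma> \<otimes>\<^bsub>BG\<^esub> mu y \<otimes>\<^bsub>BG\<^esub> mu (op y x)"
    using B.m_assoc s mu_Bij x y op_mem carrier_BG by auto
  also have "\<dots> = step t (step u \<sigma>)"
    unfolding sy step_eq[OF by' t] inv_step_eval[OF s y t] x_def by simp
  finally show ?thesis .
qed

interpretation SC: comp_fun_commute step
  by unfold_locales (auto simp: step_comm)

definition Lam where "Lam M = fold_mset step \<one>\<^bsub>BG\<^esub> M"

lemma Lam_Bij: "Lam M \<in> Bij S"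
  unfolding Lam_def
  by (induction M) (auto intro: step_Bij simp: B.one_closed[simplified carrier_BG])

lemma Lam_empty: "Lam {#} = \<one>\<^bsub>BG\<^esub>" by (simp add: Lam_def)

lemma Lam_add: "Lam (add_mset t M) = step t (Lam M)" by (simp add: Lam_def)

lemma Lam_shift: "Lam M = Lam M' \<Longrightarrow> Lam (M + N) = Lam (M' + N)"
  by (simp add: Lam_def)


lemma mu_gen: "s \<in> S \<Longrightarrow> mu s \<in> cs_group S op"
  unfolding mu_def cs_group_def psi_def by (rule generate.inv) simp

lemma Lam_gen: "Lam M \<in> cs_group S op"
proof (induction M)
  case empty
  then show ?case by (simp add: Lam_empty cs_group_def generate.one)
next
  case (add t M)
  show ?case
  proof (cases "t \<in> S")
    case True
    then show ?thesis unfolding Lam_add step_eq[OF Lam_Bij True]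
      using add mu_gen inv_in[OF Lam_Bij True] unfolding cs_group_def
      by (auto intro: generate.eng)
  next
    case False
    then show ?thesis using add by (simp add: Lam_add step_def)
  qed
qed

lemma finite_Bij: "finite (Bij S)"
proof -
  have "Bij S \<subseteq> S \<rightarrow>\<^sub>E S" using Bij_imp_extensional Bij_mem by (auto simp: PiE_def)
  moreover have "finite (S \<rightarrow>\<^sub>E S)" using fin by (simp add: finite_PiE)
  ultimately show ?thesis by (rule finite_subset)
qed

lemma range_Lam_mu: "\<sigma> \<in> range Lam \<Longrightarrow> s \<in> S \<Longrightarrow> \<sigma> \<otimes>\<^bsub>BG\<^esub> mu s \<in> range Lam"
proof -
  assume "\<sigma> \<in> range Lam" and s: "s \<in> S"
  then obtain M where M: "\<sigma> = Lam M" by auto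
  have b: "\<sigma> \<in> Bij S" using M Lam_Bij by simp
  have "Lam (add_mset (\<sigma> s) M) = \<sigma> \<otimes>\<^bsub>BG\<^esub> mu s"
    unfolding Lam_add M[symmetric] step_eq[OF b Bij_mem[OF b s]] inv_eval2[OF b s] ..
  then show ?thesis by (metis rangeI)
qed

lemma range_Lam_psi: "\<sigma> \<in> range Lam \<Longrightarrow> s \<in> S \<Longrightarrow> \<sigma> \<otimes>\<^bsub>BG\<^esub> psi s \<in> range Lam"
proof -
  assume a: "\<sigma> \<in> range Lam" and s: "s \<in> S"
  let ?f = "\<lambda>x. x \<otimes>\<^bsub>BG\<^esub> mu s"
  have sub: "range Lam \<subseteq> Bij S" using Lam_Bij by auto
  have fin': "finite (range Lam)" using finite_Bij sub finite_subset by blast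
  have "?f ` range Lam \<subseteq> range Lam" using range_Lam_mu s by auto
  moreover have "inj_on ?f (range Lam)"
  proof (rule inj_onI)
    fix x y assume "x \<in> range Lam" "y \<in> range Lam" and e: "?f x = ?f y"
    then have "x \<in> carrier BG" "y \<in> carrier BG" "mu s \<in> carrier BG"
      using sub mu_Bij[OF s] carrier_BG by auto
    then show "x = y" using e B.right_cancel by blast
  qed
  ultimately have "?f ` range Lam = range Lam" by (rule endo_inj_surj[OF fin'])
  then have "\<sigma> \<in> ?f ` range Lam" using a by simp
  then obtain y where y: "y \<in> range Lam" and sy: "\<sigma> = y \<otimes>\<^bsub>BG\<^esub> mu s" by (rule imageE)
  have yc: "y \<in> carrier BG" using y sub carrier_BG by auto
  have pc: "psi s \<in> carrier BG" using psi_Bij[OF s] carrier_BG by auto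
  have "\<sigma> \<otimes>\<^bsub>BG\<^esub> psi s = y \<otimes>\<^bsub>BG\<^esub> (mu s \<otimes>\<^bsub>BG\<^esub> psi s)"
    unfolding sy mu_def using B.m_assoc[OF yc B.inv_closed[OF pc] pc] .
  also have "\<dots> = y" unfolding mu_def using B.l_inv[OF pc] B.r_one[OF yc] by simp
  finally have "\<sigma> \<otimes>\<^bsub>BG\<^esub> psi s = y" .
  then show ?thesis using y by simp
qed

lemma gen_range_Lam: "cs_group S op \<subseteq> range Lam"
proof -
  have "\<forall>x\<in>range Lam. x \<otimes>\<^bsub>BG\<^esub> g \<in> range Lam" if "g \<in> generate BG (psi ` S)" for g
    using that
  proof (induction g rule: generate.induct)
    case one
    then show ?case using Lam_Bij carrier_BG by auto
  next
    case (incl h)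
    then show ?case using range_Lam_psi by auto
  next
    case (inv h)
    then show ?case using range_Lam_mu by (auto simp: mu_def)
  next
    case (eng h1 h2)
    have "h1 \<in> Bij S" "h2 \<in> Bij S"
      using eng.hyps B.generate_in_carrier[of "psi ` S"] psi_Bij carrier_BG by auto
    show ?case
    proof
      fix x assume "x \<in> range Lam"
      then have "x \<otimes>\<^bsub>BG\<^esub> h1 \<in> range Lam" using eng.IH by blast
      then have "x \<otimes>\<^bsub>BG\<^esub> h1 \<otimes>\<^bsub>BG\<^esub> h2 \<in> range Lam" using eng.IH by blast
      moreover have "x \<in> Bij S" using \<open>x \<in> range Lam\<close> Lam_Bij by auto
      ultimately show "x \<otimes>\<^bsub>BG\<^esub> (h1 \<otimes>\<^bsub>BG\<^esub> h2) \<in> range Lam"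
        using B.m_assoc carrier_BG \<open>h1 \<in> Bij S\<close> \<open>h2 \<in> Bij S\<close> by auto
    qed
  qed
  then have "g \<in> range Lam" if "g \<in> generate BG (psi ` S)" for g
    using that Lam_empty[symmetric] rangeI[of Lam "{#}"]
      B.l_one B.generate_in_carrier[of "psi ` S"] psi_Bij carrier_BG
    by (metis (no_types, lifting) image_subsetI subsetD)
  then show ?thesis unfolding cs_group_def psi_def[abs_def] by auto
qed

lemma range_Lam: "range Lam = cs_group S op"
  using gen_range_Lam Lam_gen by auto


lemma T_mem: "s \<in> S \<Longrightarrow> (cs_T op ^^ k) s \<in> S"
  by (induction k) (auto simp: cs_T_def op_mem)

fun Pk :: "nat \<Rightarrow> 'a \<Rightarrow> 'a \<Rightarrow> 'a" where
  "Pk 0 s = \<one>\<^bsub>BG\<^esub>"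
| "Pk (Suc k) s = psi ((cs_T op ^^ k) s) \<otimes>\<^bsub>BG\<^esub> Pk k s"

lemma Pk_Bij: "s \<in> S \<Longrightarrow> Pk k s \<in> Bij S"
  by (induction k) (auto intro!: mult_Bij psi_Bij T_mem simp: id_Bij BijGroup_def compose_Bij)

lemma psik_mem: "s \<in> S \<Longrightarrow> t \<in> S \<Longrightarrow> cs_psik op k s t \<in> S"
  by (induction k) (auto simp: op_mem T_mem)

lemma Pk_eval: "s \<in> S \<Longrightarrow> t \<in> S \<Longrightarrow> Pk k s t = cs_psik op k s t"
proof (induction k)
  case 0
  then show ?case by (simp add: one_eval)
next
  case (Suc k)
  have "Pk (Suc k) s t = psi ((cs_T op ^^ k) s) (Pk k s t)"
    using mult_eval[OF psi_Bij[OF T_mem[OF Suc.prems(1)]] Pk_Bij[OF Suc.prems(1)] Suc.prems(2)] by simp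
  also have "\<dots> = cs_psik op (Suc k) s t"
    using Suc psi_eval psik_mem by simp
  finally show ?case .
qed

lemma psik_self: "s \<in> S \<Longrightarrow> cs_psik op k s s = (cs_T op ^^ k) s"
  by (induction k) (auto simp: cs_T_def)

lemma Lam_rep: "s \<in> S \<Longrightarrow> Lam (replicate_mset k s) = inv\<^bsub>BG\<^esub> (Pk k s)"
proof (induction k)
  case 0
  then show ?case by (simp add: Lam_empty)
next
  case (Suc k)
  have pc: "Pk k s \<in> carrier BG" using Pk_Bij Suc.prems carrier_BG by auto
  have qc: "psi ((cs_T op ^^ k) s) \<in> carrier BG" using psi_Bij T_mem Suc.prems carrier_BG by auto
  have ib: "inv\<^bsub>BG\<^esub> (Pk k s) \<in> Bij S" using inv_Bij Pk_Bij Suc.prems by auto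
  have "Lam (replicate_mset (Suc k) s) = step s (inv\<^bsub>BG\<^esub> (Pk k s))"
    using Suc by (simp add: Lam_add)
  also have "\<dots> = inv\<^bsub>BG\<^esub> (Pk k s) \<otimes>\<^bsub>BG\<^esub> mu ((inv\<^bsub>BG\<^esub> (inv\<^bsub>BG\<^esub> (Pk k s))) s)"
    using step_eq[OF ib Suc.prems] .
  also have "(inv\<^bsub>BG\<^esub> (inv\<^bsub>BG\<^esub> (Pk k s))) s = (cs_T op ^^ k) s"
    using B.inv_inv[OF pc] Pk_eval[OF Suc.prems Suc.prems] psik_self[OF Suc.prems] by simp
  also have "inv\<^bsub>BG\<^esub> (Pk k s) \<otimes>\<^bsub>BG\<^esub> mu ((cs_T op ^^ k) s) = inv\<^bsub>BG\<^esub> (Pk (Suc k) s)"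
    unfolding mu_def using B.inv_mult_group[OF qc pc] by simp
  finally show ?case .
qed

lemma replicate_mset_add: "replicate_mset (a + b) x = replicate_mset a x + replicate_mset b x"
  by (induction a) auto

definition mset_of :: "('a \<Rightarrow> nat) \<Rightarrow> 'a multiset" where
  "mset_of f = (\<Sum>x\<in>S. replicate_mset (f x) x)"

lemma mset_of_add: "mset_of (\<lambda>x. f x + g x) = mset_of f + mset_of g"
  by (simp add: mset_of_def replicate_mset_add sum.distrib)

lemma mset_of_cong: "(\<And>x. x \<in> S \<Longrightarrow> f x = g x) \<Longrightarrow> mset_of f = mset_of g"
  unfolding mset_of_def by (rule sum.cong) auto

lemma mset_of_count: "set_mset M \<subseteq> S \<Longrightarrow> mset_of (count M) = M"
proof (rule multiset_eqI)
  fix y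
  assume sub: "set_mset M \<subseteq> S"
  have "count (mset_of (count M)) y = (\<Sum>x\<in>S. if y = x then count M x else 0)"
    unfolding mset_of_def count_sum by (simp add: eq_commute)
  also have "\<dots> = (if y \<in> S then count M y else 0)" using fin by (simp add: sum.delta')
  also have "\<dots> = count M y" using sub by (auto simp: not_in_iff[symmetric])
  finally show "count (mset_of (count M)) y = count M y" .
qed

lemma Lam_filter: "Lam M = Lam (filter_mset (\<lambda>x. x \<in> S) M)"
proof (induction M)
  case empty
  then show ?case by simp
next
  case (add t M)
  show ?case
  proof (cases "t \<in> S")
    case True
    then show ?thesis using add.IH by (simp add: Lam_add)
  next
    case False
    have "step t \<sigma> = \<sigma>" for \<sigma> using False unfolding step_def by simp
    then show ?thesis using add.IH False by (simp add: Lam_add)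
  qed
qed

definition LamF where "LamF f = Lam (mset_of f)"

lemma LamF_gen: "LamF f \<in> cs_group S op"
  unfolding LamF_def by (rule Lam_gen)

end

locale cs_ctx_d = cs_ctx +
  fixes d :: nat
  assumes dpos: "d \<ge> 1" and per: "\<forall>s\<in>S. \<forall>t\<in>S. cs_psik op d s t = t"
begin

interpretation B: group "BijGroup S" by (rule group_BijGroup)

lemma Lam_rep_d: "s \<in> S \<Longrightarrow> Lam (replicate_mset d s) = \<one>\<^bsub>BG\<^esub>"
proof -
  assume s: "s \<in> S"
  have "Pk d s = \<one>\<^bsub>BG\<^esub>"
  proof (rule Bij_eqI[OF Pk_Bij[OF s]])
    show "\<one>\<^bsub>BG\<^esub> \<in> Bij S" using B.one_closed carrier_BG by simp
    fix x assume x: "x \<in> S"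
    have "Pk d s x = cs_psik op d s x" using Pk_eval[OF s x] .
    also have "\<dots> = x" using per s x by blast
    also have "\<dots> = \<one>\<^bsub>BG\<^esub> x" using one_eval[OF x] by simp
    finally show "Pk d s x = \<one>\<^bsub>BG\<^esub> x" .
  qed
  then show ?thesis using Lam_rep[OF s] B.inv_one by simp
qed

lemma Lam_dmult: "s \<in> S \<Longrightarrow> Lam (N + replicate_mset (d * k) s) = Lam N"
proof (induction k)
  case 0
  then show ?case by simp
next
  case (Suc k)
  have e: "N + replicate_mset (d * Suc k) s = replicate_mset d s + (N + replicate_mset (d * k) s)"
    by (simp add: replicate_mset_add add_ac)
  have "Lam (replicate_mset d s) = Lam {#}" using Lam_rep_d Suc.prems Lam_empty by simp
  then have "Lam (replicate_mset d s + (N + replicate_mset (d * k) s)) = Lam ({#} + (N + replicate_mset (d * k) s))"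
    by (rule Lam_shift)
  then have "Lam (N + replicate_mset (d * Suc k) s) = Lam (N + replicate_mset (d * k) s)"
    by (simp only: e) simp
  then show ?case using Suc.IH Suc.prems by simp
qed

lemma Lam_div_aux: "finite X \<Longrightarrow> X \<subseteq> S \<Longrightarrow> (\<forall>x\<in>S. d dvd h x) \<Longrightarrow>
   Lam (N + (\<Sum>x\<in>X. replicate_mset (h x) x)) = Lam N"
proof (induction X rule: finite_induct)
  case empty
  then show ?case by simp
next
  case (insert x F)
  have xs: "x \<in> S" using insert by auto
  obtain k where k: "h x = d * k" using insert.prems xs by (meson dvdE)
  have eq: "N + (\<Sum>x\<in>insert x F. replicate_mset (h x) x) = (N + (\<Sum>x\<in>F. replicate_mset (h x) x)) + replicate_mset (d * k) x"
    using insert k by (simp add: add_ac)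
  have "Lam (N + (\<Sum>x\<in>insert x F. replicate_mset (h x) x)) = Lam (N + (\<Sum>x\<in>F. replicate_mset (h x) x))"
    unfolding eq by (rule Lam_dmult[OF xs])
  then show ?case using insert by simp
qed

lemma Lam_div: "(\<forall>x\<in>S. d dvd h x) \<Longrightarrow> Lam (N + mset_of h) = Lam N"
  unfolding mset_of_def using Lam_div_aux fin by blast

lemma LamF_mod: "LamF f = LamF (\<lambda>x. f x mod d)"
proof -
  have "mset_of f = mset_of (\<lambda>x. f x mod d + d * (f x div d))"
    by (rule mset_of_cong) simp
  also have "\<dots> = mset_of (\<lambda>x. f x mod d) + mset_of (\<lambda>x. d * (f x div d))"
    by (rule mset_of_add)
  finally show ?thesis unfolding LamF_def using Lam_div[of "\<lambda>x. d * (f x div d)"] by simp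
qed

lemma LamF_cong_mod: "(\<And>x. x \<in> S \<Longrightarrow> f x mod d = g x mod d) \<Longrightarrow> LamF f = LamF g"
proof -
  assume a: "\<And>x. x \<in> S \<Longrightarrow> f x mod d = g x mod d"
  have "LamF f = LamF (\<lambda>x. f x mod d)" by (rule LamF_mod)
  also have "\<dots> = LamF (\<lambda>x. g x mod d)" unfolding LamF_def
    by (rule arg_cong[where f=Lam], rule mset_of_cong, rule a)
  also have "\<dots> = LamF g" by (rule LamF_mod[symmetric])
  finally show ?thesis .
qed

end

context cs_ctx
begin

interpretation B: group "BijGroup S" by (rule group_BijGroup)

lemma psiS_sub: "psi ` S \<subseteq> carrier BG" using psi_Bij carrier_BG by auto

lemma G_sub: "cs_group S op \<subseteq> Bij S"
  unfolding cs_group_def psi_def[symmetric, abs_def]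
  using B.generate_in_carrier[OF psiS_sub] carrier_BG by auto

lemma G_subgroup: "subgroup (cs_group S op) BG"
  unfolding cs_group_def psi_def[symmetric, abs_def]
  by (rule B.generate_is_subgroup[OF psiS_sub])

lemma psi_in_G: "s \<in> S \<Longrightarrow> psi s \<in> cs_group S op"
  unfolding cs_group_def psi_def by (rule generate.incl) simp

lemma orbit_eq:
  assumes ind: "indecomposable S op" and s0: "s0 \<in> S"
  shows "(\<lambda>g. g s0) ` cs_group S op = S"
proof (rule ccontr)
  assume ne: "(\<lambda>g. g s0) ` cs_group S op \<noteq> S"
  define X where "X = (\<lambda>g. g s0) ` cs_group S op"
  define Y where "Y = S - X"
  have XS: "X \<subseteq> S" unfolding X_def using G_sub Bij_mem s0 by auto
  have one: "\<one>\<^bsub>BG\<^esub> \<in> cs_group S op" using subgroup.one_closed[OF G_subgroup] by simp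
  have "s0 \<in> X" unfolding X_def by (rule rev_image_eqI[OF one]) (simp add: one_eval[OF s0])
  then have Xne: "X \<noteq> {}" by auto
  have "X \<noteq> S" using ne X_def by simp
  then have Yne: "Y \<noteq> {}" using XS unfolding Y_def by blast
  have un: "X \<union> Y = S" using XS Y_def by auto
  have int: "X \<inter> Y = {}" using Y_def by auto
  have inv: "cs_psi S op s ` X \<subseteq> X \<and> cs_psi S op s ` Y \<subseteq> Y" if s: "s \<in> S" for s
  proof
    show "cs_psi S op s ` X \<subseteq> X"
    proof
      fix z assume "z \<in> cs_psi S op s ` X"
      then obtain g where g: "g \<in> cs_group S op" and z: "z = psi s (g s0)"
        unfolding X_def psi_def by (auto simp only: image_iff)
      have gb: "g \<in> Bij S" using g G_sub by auto
      have "z = (psi s \<otimes>\<^bsub>BG\<^esub> g) s0" using z mult_eval[OF psi_Bij[OF s] gb s0] by simp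
      moreover have "psi s \<otimes>\<^bsub>BG\<^esub> g \<in> cs_group S op"
        using subgroup.m_closed[OF G_subgroup psi_in_G[OF s] g] by simp
      ultimately show "z \<in> X" unfolding X_def by auto
    qed
    show "cs_psi S op s ` Y \<subseteq> Y"
    proof
      fix z assume "z \<in> cs_psi S op s ` Y"
      then obtain y where y: "y \<in> Y" and z: "z = psi s y" unfolding psi_def by (auto simp only: image_iff)
      have yS: "y \<in> S" using y Y_def by auto
      have zS: "z \<in> S" using z Bij_mem[OF psi_Bij[OF s] yS] by simp
      have "z \<notin> X"
      proof
        assume "z \<in> X"
        then obtain g where g: "g \<in> cs_group S op" and zg: "z = g s0" unfolding X_def by auto
        have gb: "g \<in> Bij S" using g G_sub by auto
        have "y = (inv\<^bsub>BG\<^esub> (psi s)) z" using z inv_eval2[OF psi_Bij[OF s] yS] by simp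
        also have "\<dots> = (mu s \<otimes>\<^bsub>BG\<^esub> g) s0" unfolding mu_def
          using zg mult_eval[OF inv_Bij[OF psi_Bij[OF s]] gb s0] by simp
        finally have "y = (mu s \<otimes>\<^bsub>BG\<^esub> g) s0" .
        moreover have "mu s \<otimes>\<^bsub>BG\<^esub> g \<in> cs_group S op"
          using subgroup.m_closed[OF G_subgroup mu_gen[OF s] g] by simp
        ultimately have "y \<in> X" unfolding X_def by auto
        then show False using y Y_def by auto
      qed
      then show "z \<in> Y" using zS Y_def by auto
    qed
  qed
  have "decomposable S op" unfolding decomposable_def
    by (intro exI[of _ X] exI[of _ Y] conjI Xne Yne un int ballI inv)
  then show False using ind unfolding indecomposable_def by simp
qed

lemma card_dvd_G:
  assumes ind: "indecomposable S op" and s0: "s0 \<in> S"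
  shows "card S dvd card (cs_group S op)"
proof -
  define H where "H = BG\<lparr>carrier := cs_group S op\<rparr>"
  have gH: "group H" unfolding H_def by (rule subgroup.subgroup_is_group[OF G_subgroup group_BijGroup])
  have hom: "(\<lambda>g. g) \<in> hom H BG"
    unfolding hom_def H_def using G_sub carrier_BG by auto
  have ga: "group_action H S (\<lambda>g. g)"
    unfolding group_action_def group_hom_def group_hom_axioms_def
    using gH group_BijGroup hom by auto
  have "orbit H (\<lambda>g. g) s0 = (\<lambda>g. g s0) ` cs_group S op"
    unfolding orbit_def H_def by auto
  then have "orbit H (\<lambda>g. g) s0 = S" using orbit_eq[OF ind s0] by simp
  moreover have "order H = card (cs_group S op)" unfolding order_def H_def by simp
  ultimately have "card S * card (stabilizer H (\<lambda>g. g) s0) = card (cs_group S op)"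
    using group_action.orbit_stabilizer_theorem[OF ga s0] by simp
  then show ?thesis by (metis dvd_triv_left)
qed

end

context cs_ctx_d
begin

interpretation B: group "BijGroup S" by (rule group_BijGroup)

definition "Bset = S \<rightarrow>\<^sub>E {..<d}"
definition "Kset = {k \<in> Bset. LamF k = \<one>\<^bsub>BG\<^esub>}"
definition "addv r k = (\<lambda>x\<in>S. (r x + k x) mod d)"
definition "subv f r = (\<lambda>x\<in>S. (f x + (d - r x)) mod d)"
definition "repr g = (SOME r. r \<in> Bset \<and> LamF r = g)"

lemma Bset_lt: "f \<in> Bset \<Longrightarrow> x \<in> S \<Longrightarrow> f x < d"
  unfolding Bset_def by auto

lemma restrict_mod_Bset: "(\<lambda>x\<in>S. h x mod d) \<in> Bset"
  unfolding Bset_def using dpos by auto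

lemma addv_Bset: "addv r k \<in> Bset" unfolding addv_def by (rule restrict_mod_Bset)
lemma subv_Bset: "subv r k \<in> Bset" unfolding subv_def by (rule restrict_mod_Bset)

lemma LamF_image: "LamF ` Bset = cs_group S op"
proof
  show "LamF ` Bset \<subseteq> cs_group S op" using LamF_gen by auto
  show "cs_group S op \<subseteq> LamF ` Bset"
  proof
    fix g assume "g \<in> cs_group S op"
    then obtain M where gM: "g = Lam M" using range_Lam by auto
    define M' where "M' = filter_mset (\<lambda>x. x \<in> S) M"
    have "set_mset M' \<subseteq> S" unfolding M'_def by auto
    then have "g = LamF (count M')" unfolding LamF_def
      using gM Lam_filter[of M] mset_of_count[OF \<open>set_mset M' \<subseteq> S\<close>] unfolding M'_def[symmetric] by simp
    also have "\<dots> = LamF (\<lambda>x\<in>S. count M' x mod d)"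
      by (rule LamF_cong_mod) simp
    finally show "g \<in> LamF ` Bset" using restrict_mod_Bset by blast
  qed
qed

lemma repr_prop: "g \<in> cs_group S op \<Longrightarrow> repr g \<in> Bset \<and> LamF (repr g) = g"
proof -
  assume "g \<in> cs_group S op"
  then have "\<exists>r. r \<in> Bset \<and> LamF r = g" using LamF_image by (metis imageE)
  then show ?thesis unfolding repr_def by (rule someI_ex)
qed

lemma LamF_addv: "LamF (addv r k) = LamF r" if "k \<in> Kset"
proof -
  have "LamF (addv r k) = LamF (\<lambda>x. r x + k x)"
    unfolding addv_def by (rule LamF_cong_mod) simp
  also have "\<dots> = Lam (mset_of k + mset_of r)" unfolding LamF_def mset_of_add by (simp add: add_ac)
  also have "\<dots> = Lam ({#} + mset_of r)"
    using that Lam_empty unfolding Kset_def LamF_def by (intro Lam_shift) simp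
  finally show ?thesis unfolding LamF_def by simp
qed

lemma LamF_subv: "LamF (subv f r) = \<one>\<^bsub>BG\<^esub>" if "r \<in> Bset" "LamF f = LamF r"
proof -
  have "LamF (subv f r) = LamF (\<lambda>x. f x + (d - r x))"
    unfolding subv_def by (rule LamF_cong_mod) simp
  also have "\<dots> = Lam (mset_of f + mset_of (\<lambda>x. d - r x))" unfolding LamF_def mset_of_add ..
  also have "\<dots> = Lam (mset_of r + mset_of (\<lambda>x. d - r x))"
    using that(2) unfolding LamF_def by (rule Lam_shift)
  also have "\<dots> = Lam ({#} + mset_of (\<lambda>x. r x + (d - r x)))" unfolding mset_of_add by simp
  also have "\<dots> = Lam {#}"
    by (rule Lam_div) (use Bset_lt[OF that(1)] in \<open>auto simp: less_imp_le\<close>)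
  finally show ?thesis using Lam_empty by simp
qed

lemma arith1: "a < d \<Longrightarrow> b < (d::nat) \<Longrightarrow> ((a + b) mod d + (d - a)) mod d = b"
proof -
  assume a: "a < d" and b: "b < d"
  have "((a + b) mod d + (d - a)) mod d = (a + b + (d - a)) mod d" by (simp add: mod_add_left_eq)
  also have "a + b + (d - a) = b + d" using a by simp
  finally show ?thesis using b by simp
qed

lemma arith2: "a < d \<Longrightarrow> b < (d::nat) \<Longrightarrow> (a + (b + (d - a)) mod d) mod d = b"
proof -
  assume a: "a < d" and b: "b < d"
  have "(a + (b + (d - a)) mod d) mod d = (a + (b + (d - a))) mod d" by (simp add: mod_add_right_eq)
  also have "a + (b + (d - a)) = b + d" using a by simp
  finally show ?thesis using b by simp
qed

lemma Bset_ext: "f \<in> Bset \<Longrightarrow> g \<in> Bset \<Longrightarrow> (\<And>x. x \<in> S \<Longrightarrow> f x = g x) \<Longrightarrow> f = g"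
  unfolding Bset_def by (meson PiE_ext)

lemma sub_add: "r \<in> Bset \<Longrightarrow> k \<in> Bset \<Longrightarrow> subv (addv r k) r = k"
  by (rule Bset_ext[OF subv_Bset]) (auto simp: subv_def addv_def arith1 Bset_lt)

lemma add_sub: "r \<in> Bset \<Longrightarrow> f \<in> Bset \<Longrightarrow> addv r (subv f r) = f"
  by (rule Bset_ext[OF addv_Bset]) (auto simp: subv_def addv_def arith2 Bset_lt)

lemma card_G_dvd: "card (cs_group S op) dvd d ^ card S"
proof -
  define phi where "phi f = (LamF f, subv f (repr (LamF f)))" for f
  define chi where "chi p = addv (repr (fst p)) (snd p)" for p :: "('a \<Rightarrow> 'a) \<times> ('a \<Rightarrow> nat)"
  have "bij_betw phi Bset (cs_group S op \<times> Kset)"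
  proof (rule bij_betw_byWitness[where f'=chi])
    show "\<forall>a\<in>Bset. chi (phi a) = a"
    proof
      fix f assume f: "f \<in> Bset"
      have "LamF f \<in> cs_group S op" by (rule LamF_gen)
      then show "chi (phi f) = f" unfolding chi_def phi_def using add_sub repr_prop f by simp
    qed
    show "\<forall>a'\<in>cs_group S op \<times> Kset. phi (chi a') = a'"
    proof
      fix p assume p: "p \<in> cs_group S op \<times> Kset"
      obtain g k where pk: "p = (g, k)" by fastforce
      have g: "g \<in> cs_group S op" and k: "k \<in> Kset" using p pk by auto
      have r: "repr g \<in> Bset" "LamF (repr g) = g" using repr_prop[OF g] by auto
      have kb: "k \<in> Bset" using k Kset_def by auto
      have l: "LamF (addv (repr g) k) = g" using LamF_addv[OF k] r by simp
      show "phi (chi p) = p" unfolding phi_def chi_def pk using l sub_add[OF r(1) kb] by simp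
    qed
    show "phi ` Bset \<subseteq> cs_group S op \<times> Kset"
    proof
      fix q assume "q \<in> phi ` Bset"
      then obtain f where f: "f \<in> Bset" and q: "q = phi f" by auto
      have g: "LamF f \<in> cs_group S op" by (rule LamF_gen)
      have "LamF (subv f (repr (LamF f))) = \<one>\<^bsub>BG\<^esub>"
        using repr_prop[OF g] by (intro LamF_subv) auto
      then show "q \<in> cs_group S op \<times> Kset" unfolding q phi_def Kset_def
        using g subv_Bset by simp
    qed
    show "chi ` (cs_group S op \<times> Kset) \<subseteq> Bset" unfolding chi_def using addv_Bset by auto
  qed
  then have "card Bset = card (cs_group S op \<times> Kset)" by (rule bij_betw_same_card)
  also have "\<dots> = card (cs_group S op) * card Kset" by (rule card_cartesian_product)
  finally have "card Bset = card (cs_group S op) * card Kset" .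
  moreover have "card Bset = d ^ card S" unfolding Bset_def using fin by (simp add: card_PiE)
  ultimately show ?thesis by (metis dvd_triv_left)
qed

end

lemma prime_power_only:
  fixes n p :: nat
  assumes "n > 0" "prime p" "\<forall>q. prime q \<and> q dvd n \<longrightarrow> q = p"
  shows "\<exists>m. n = p ^ m"
  using assms
proof (induction n rule: less_induct)
  case (less n)
  show ?case
  proof (cases "n = 1")
    case True
    then have "n = p ^ 0" by simp
    then show ?thesis by (rule exI)
  next
    case False
    then obtain q where q: "prime q" "q dvd n" using prime_factor_nat by blast
    then have qp: "q = p" using less.prems(3) by blast
    from q(2) obtain n' where n': "n = q * n'" by (rule dvdE)
    have p1: "p > 1" using less.prems(2) prime_gt_1_nat by blast
    have n'0: "n' > 0" using n' less.prems(1) by (cases "n' = 0") simp_all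
    have "1 * n' < p * n'" using p1 n'0 by (intro mult_strict_right_mono) simp_all
    then have lt: "n' < n" using n' qp by simp
    have allq: "\<forall>q. prime q \<and> q dvd n' \<longrightarrow> q = p"
    proof (intro allI impI)
      fix r assume r: "prime r \<and> r dvd n'"
      then have "r dvd n" using n' by simp
      then show "r = p" using r less.prems(3) by blast
    qed
    obtain m where "n' = p ^ m" using less.IH[OF lt n'0 less.prems(2) allq] by blast
    then have "n = p ^ Suc m" using n' qp by simp
    then show ?thesis by (rule exI)
  qed
qed

theorem mainTheorem7:
  fixes S :: "'a set" and op :: "'a \<Rightarrow> 'a \<Rightarrow> 'a" and n d :: nat
  assumes "cycle_set S op"
    and "finite S" and "S \<noteq> {}"
    and "card S = n"
    and "indecomposable S op"
    and "is_class S op d"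
  shows "n dvd card (cs_group S op) \<and>
         (\<forall>p::nat. prime p \<and> p dvd n \<longrightarrow> p dvd card (cs_group S op) \<and> p dvd d) \<and>
         (\<forall>p k::nat. prime p \<and> d = p ^ k \<longrightarrow> (\<exists>m. n = p ^ m))"
proof -
  have cl: "d \<ge> 1" "\<forall>s\<in>S. \<forall>t\<in>S. cs_psik op d s t = t"
    using assms(6) unfolding is_class_def by blast+
  interpret C: cs_ctx_d S op d
    unfolding cs_ctx_d_def cs_ctx_d_axioms_def cs_ctx_def
    using assms(1,2) cl by blast
  obtain s0 where s0: "s0 \<in> S" using assms(3) by auto
  have A: "n dvd card (cs_group S op)" using C.card_dvd_G[OF assms(5) s0] assms(4) by simp
  have D: "card (cs_group S op) dvd d ^ n" using C.card_G_dvd assms(4) by simp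
  have B: "\<forall>p::nat. prime p \<and> p dvd n \<longrightarrow> p dvd card (cs_group S op) \<and> p dvd d"
  proof (intro allI impI)
    fix p :: nat assume p: "prime p \<and> p dvd n"
    have pG: "p dvd card (cs_group S op)" using p A by (rule_tac dvd_trans) simp_all
    have "p dvd d ^ n" using pG D by (rule dvd_trans)
    then have "p dvd d" using p prime_dvd_power by blast
    then show "p dvd card (cs_group S op) \<and> p dvd d" using pG by simp
  qed
  have npos: "n > 0" using assms(2,3,4) by auto
  have C3: "\<forall>p k::nat. prime p \<and> d = p ^ k \<longrightarrow> (\<exists>m. n = p ^ m)"
  proof (intro allI impI)
    fix p k :: nat assume pk: "prime p \<and> d = p ^ k"
    have "\<forall>q. prime q \<and> q dvd n \<longrightarrow> q = p"
    proof (intro allI impI)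
      fix q :: nat assume q: "prime q \<and> q dvd n"
      then have "q dvd d" using B by blast
      then have "q dvd p ^ k" using pk by simp
      then have "q dvd p" using q prime_dvd_power by blast
      then show "q = p" using q pk primes_dvd_imp_eq by blast
    qed
    then show "\<exists>m. n = p ^ m" using prime_power_only[OF npos] pk by blast
  qed
  show ?thesis using A B C3 by (intro conjI)
qed

end
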